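(* Let $N\ge 2$ be an integer and $\lambda>0$, $\mu>0$, $\Delta\ge 0$, $T_{cl}>0$ real ($T_{cl}=\mathbb{E}[T_{\text{cl}}]$, the expected cloud time). For each integer $c\in\{1,\dots,N\}$ let $a(c)=\lambda(\Delta+\frac{c}{N\mu})$ and $P_b(c)=\frac{a(c)^c/c!}{\sum_{j=0}^{c}a(c)^j/j!}$. For each positive divisor $c$ of $N$ (with $m=N/c$) define the average system time $$\mathbb{E}[T_{\text{sys}}(c)]=(1-P_b(c))\Big(\Delta+\frac{c}{N\mu}\Big)+P_b(c)\,T_{cl}.$$ (i) If $$T_{cl}\ge\frac{1}{\mu}\,\frac{1-\frac1N-P_b(N)+\frac{P_b(1)}{N}}{P_b(\lfloor N/2\rfloor)-P_b(N)}+\Delta,$$ then $\mathbb{E}[T_{\text{sys}}(c)]$ is minimized over the positive divisors $c$ of $N$ at $c=N$ (i.e. $m=1$). (ii) Assume $N\ge 3$. If $T_{cl}\in\big(\Delta+\frac{1}{N\mu},\,\Delta+\frac1\mu\big)$ and $\lambda\le\frac{N\mu}{(N-2)(\Delta N\mu+1)}$, then $\mathbb{E}[T_{\text{sys}}(c)]$ is minimized over the positive divisors $c$ of $N$ at $c=1$ (i.e. $m=N$).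
   Context: Model: an edge system has $N$ workers split into $c$ groups of $m=N/c$ workers each. Jobs arrive as a Poisson process of rate $\lambda$; each job is replicated to the $m$ workers of a free group, and a job finding all groups busy is blocked and executed in the cloud, taking expected time $T_{cl}$. Worker service times are shifted exponential $\mathrm{SExp}(\Delta,\mu)$ ($\Delta$ plus an exponential of rate $\mu$), so the job-computing time has mean $\Delta+\frac{1}{m\mu}=\Delta+\frac{c}{N\mu}$. Blocking is modeled by an M/G/c/c loss queue, giving the Erlang B blocking probability $P_b(c)$ with offered load $a(c)=\lambda\,\mathbb{E}[T_{\text{job}}]$. The average system time is $(1-P_b)\mathbb{E}[T_{\text{job}}]+P_b\,\mathbb{E}[T_{\text{cl}}]$. *)

theory Defs
  imports Complex_Main
begin

definition offered_load :: "nat \<Rightarrow> real \<Rightarrow> real \<Rightarrow> real \<Rightarrow> nat \<Rightarrow> real" where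
  "offered_load N lam mu Delta c = lam * (Delta + real c / (real N * mu))"

definition erlangB :: "real \<Rightarrow> nat \<Rightarrow> real" where
  "erlangB a c = (a ^ c / fact c) / (\<Sum>j = 0..c. a ^ j / fact j)"

definition Pb :: "nat \<Rightarrow> real \<Rightarrow> real \<Rightarrow> real \<Rightarrow> nat \<Rightarrow> real" where
  "Pb N lam mu Delta c = erlangB (offered_load N lam mu Delta c) c"

definition Tsys :: "nat \<Rightarrow> real \<Rightarrow> real \<Rightarrow> real \<Rightarrow> real \<Rightarrow> nat \<Rightarrow> real" where
  "Tsys N lam mu Delta Tcl c =
     (1 - Pb N lam mu Delta c) * (Delta + real c / (real N * mu)) + Pb N lam mu Delta c * Tcl"

end

theory Submission imports Defs begin

definition II :: "nat \<Rightarrow> real \<Rightarrow> real" where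
  "II n a = (\<Sum>j = 0..n. a ^ j / fact j) * fact n / a ^ n"

lemma II_0: "II 0 a = 1" by (simp add: II_def)

lemma II_Suc: assumes "a > 0" shows "II (Suc n) a = 1 + (Suc n) / a * II n a"
proof -
  have "II (Suc n) a = ((\<Sum>j = 0..n. a ^ j / fact j) + a ^ Suc n / fact (Suc n)) * fact (Suc n) / a ^ Suc n"
    by (simp add: II_def)
  also have "\<dots> = 1 + (Suc n) / a * II n a"
    using assms by (simp add: II_def field_simps fact_Suc del: of_nat_Suc)
  finally show ?thesis .
qed

lemma II_ge1: assumes "a > 0" shows "II n a \<ge> 1"
proof (induction n)
  case 0 then show ?case by (simp add: II_0)
next
  case (Suc n)
  have "0 \<le> (Suc n) / a * II n a" using Suc assms by simp
  then show ?case using II_Suc[OF assms] by simp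
qed

lemma II_anti: assumes "0 < a" "a \<le> b" shows "II n b \<le> II n a"
proof (induction n)
  case 0 then show ?case by (simp add: II_0)
next
  case (Suc n)
  have b: "b > 0" using assms by simp
  have "(Suc n) / b \<le> (Suc n) / a" using assms by (simp add: frac_le)
  moreover have "0 \<le> II n b" using II_ge1[OF b, of n] by linarith
  moreover have "0 \<le> (Suc n) / b" using b by simp
  ultimately have "(Suc n) / b * II n b \<le> (Suc n) / a * II n a"
    using Suc by (meson mult_mono order_trans)
  then show ?case using II_Suc[OF assms(1)] II_Suc[OF b] by simp
qed

lemma II_step: assumes "n \<ge> 1" shows "\<forall>a>0. II n a < II (Suc n) (a * (Suc n) / n)"
  using assms
proof (induction n rule: dec_induct)
  case base
  show ?case
  proof (intro allI impI)
    fix a :: real assume a: "a > 0"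
    have "II (Suc 1) (a * 2) = 1 + 1 / a * II 1 (a*2)" using II_Suc[of "a*2" 1] a by simp
    also have "II 1 (a*2) = 1 + 1/(a*2)" using II_Suc[of "a*2" 0] a by (simp add: II_0)
    finally have "II (Suc 1) (a * 2) = 1 + 1/a + 1/(2*a*a)" using a by (simp add: field_simps)
    moreover have "II 1 a = 1 + 1/a" using II_Suc[of a 0] a by (simp add: II_0)
    ultimately show "II 1 a < II (Suc 1) (a * real (Suc 1) / real 1)" using a by simp
  qed
next
  case (step n)
  show ?case
  proof (intro allI impI)
    fix a :: real assume a: "a > 0"
    define r where "r = real n"
    have r: "r > 0" using step(1) by (simp add: r_def)
    have r1: "r + 1 > 0" "r + 2 > 0" using r by simp_all
    define b where "b = a * (r + 2) / (r + 1)"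
    have b: "b > 0" using a r1 by (simp add: b_def)
    have bq: "(r + 2) / b = (r + 1) / a" unfolding b_def using a r1 by (auto simp: divide_simps)
    define a' where "a' = a * r * (r + 2) / ((r + 1) * (r + 1))"
    have a'p: "a' > 0" using a r r1 by (simp add: a'_def)
    have a'b: "a' * (r + 1) / r = b" unfolding a'_def b_def using r r1 by (auto simp: divide_simps)
    have "a' \<le> a"
    proof -
      have "r * (r+2) \<le> (r+1)*(r+1)" by (simp add: algebra_simps)
      hence "a * (r * (r+2)) \<le> a * ((r+1)*(r+1))" using a by (intro mult_left_mono) auto
      moreover have d: "(r+1)*(r+1) > 0" using r1 by simp
      ultimately show ?thesis unfolding a'_def by (simp only: pos_divide_le_eq[OF d] mult.assoc)
    qed
    have "II n a \<le> II n a'" using II_anti[OF a'p \<open>a' \<le> a\<close>] .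
    also have "\<dots> < II (Suc n) (a' * (Suc n) / n)" using step(3) a'p by blast
    also have "a' * (Suc n) / n = b" using a'b by (simp add: r_def add.commute)
    finally have lt: "II n a < II (Suc n) b" .
    have bq': "real (Suc (Suc n)) / b = real (Suc n) / a" using bq by (simp add: r_def add.commute)
    have e2: "1 + (Suc n)/a * II (Suc n) b = II (Suc (Suc n)) b"
      by (subst II_Suc[OF b], subst bq', rule refl)
    have "II (Suc n) a = 1 + (Suc n)/a * II n a" using II_Suc[OF a] .
    also have "\<dots> < 1 + (Suc n)/a * II (Suc n) b" using lt a by (simp add: divide_strict_right_mono)
    also have "\<dots> = II (Suc (Suc n)) b" by (rule e2)
    also have "b = a * real (Suc (Suc n)) / real (Suc n)" by (simp add: b_def r_def add.commute)
    finally show "II (Suc n) a < II (Suc (Suc n)) (a * real (Suc (Suc n)) / real (Suc n))" .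
  qed
qed

lemma erlangB_II: assumes "a > 0" shows "erlangB a n = 1 / II n a"
proof -
  have "(\<Sum>j = 0..n. a ^ j / fact j) > 0" using assms
    by (intro sum_pos2[where i=0]) auto
  thus ?thesis using assms by (simp add: erlangB_def II_def field_simps)
qed

lemma g_step:
  assumes "lam > 0" "mu > 0" "Delta \<ge> 0" "N > 0" "c \<ge> 1"
  shows "II c (offered_load N lam mu Delta c) < II (Suc c) (offered_load N lam mu Delta (Suc c))"
proof -
  define a where "a = offered_load N lam mu Delta c"
  define b where "b = offered_load N lam mu Delta (Suc c)"
  have a: "a > 0" using assms by (simp add: a_def offered_load_def add_nonneg_pos)
  have b: "b > 0" using assms by (simp add: b_def offered_load_def add_nonneg_pos)
  have "b \<le> a * (Suc c) / c"
  proof -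
    have "b * c = lam * Delta * c + lam * c * (c+1) / (N*mu)"
      by (simp add: b_def offered_load_def algebra_simps)
    also have "\<dots> \<le> lam * Delta * (c+1) + lam * c * (c+1) / (N*mu)"
      using assms by (simp add: mult_left_mono)
    also have "\<dots> = a * (Suc c)" by (simp add: a_def offered_load_def algebra_simps)
    finally show ?thesis using assms by (simp add: field_simps)
  qed
  have "II c a < II (Suc c) (a * (Suc c) / c)" using II_step[OF assms(5)] a by blast
  also have "\<dots> \<le> II (Suc c) b" using II_anti[OF b \<open>b \<le> a * (Suc c) / c\<close>] .
  finally show ?thesis by (simp add: a_def b_def)
qed

lemma g_mono:
  assumes "lam > 0" "mu > 0" "Delta \<ge> 0" "N > 0" "m \<ge> 1" "m < n"
  shows "II m (offered_load N lam mu Delta m) < II n (offered_load N lam mu Delta n)"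
proof -
  have "Suc m \<le> n" using assms by simp
  then show ?thesis
  proof (induction n rule: dec_induct)
    case base then show ?case using g_step assms by blast
  next
    case (step n)
    then show ?case using g_step[OF assms(1-4), of n] assms by simp
  qed
qed

lemma Pb_eq:
  assumes "lam > 0" "mu > 0" "Delta \<ge> 0" "N > 0" "c > 0"
  shows "Pb N lam mu Delta c = 1 / II c (offered_load N lam mu Delta c)"
proof -
  have "offered_load N lam mu Delta c > 0" using assms by (simp add: offered_load_def add_nonneg_pos)
  thus ?thesis by (simp add: Pb_def erlangB_II)
qed

lemma Pb_mono:
  assumes "lam > 0" "mu > 0" "Delta \<ge> 0" "N > 0" "m \<ge> 1" "m < n"
  shows "Pb N lam mu Delta n < Pb N lam mu Delta m"
proof -
  have p: "offered_load N lam mu Delta m > 0" using assms by (simp add: offered_load_def add_nonneg_pos)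
  have "II m (offered_load N lam mu Delta m) \<ge> 1" using II_ge1[OF p] .
  thus ?thesis using g_mono[OF assms] Pb_eq[OF assms(1-4), of m] Pb_eq[OF assms(1-4), of n] assms by (simp add: frac_less2)
qed

lemma Pb_mono_le:
  assumes "lam > 0" "mu > 0" "Delta \<ge> 0" "N > 0" "m \<ge> 1" "m \<le> n"
  shows "Pb N lam mu Delta n \<le> Pb N lam mu Delta m"
  using Pb_mono[OF assms(1-5)] assms(6) by (metis le_less order_refl less_imp_le)

lemma Pb_bounds:
  assumes "lam > 0" "mu > 0" "Delta \<ge> 0" "N > 0" "c > 0"
  shows "0 < Pb N lam mu Delta c \<and> Pb N lam mu Delta c \<le> 1"
proof -
  have p: "offered_load N lam mu Delta c > 0" using assms by (simp add: offered_load_def add_nonneg_pos)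
  have "II c (offered_load N lam mu Delta c) \<ge> 1" using II_ge1[OF p] .
  thus ?thesis using Pb_eq[OF assms] by simp
qed

lemma Pb_one: "Pb N lam mu Delta 1 = offered_load N lam mu Delta 1 / (1 + offered_load N lam mu Delta 1)"
  by (simp add: Pb_def erlangB_def)

theorem theorem2:
  fixes N :: nat and lam mu Delta Tcl :: real
  assumes "N \<ge> 2" and "lam > 0" and "mu > 0" and "Delta \<ge> 0" and "Tcl > 0"
  shows "(Tcl \<ge> (1 / mu) *
            ((1 - 1 / real N - Pb N lam mu Delta N + Pb N lam mu Delta 1 / real N)
             / (Pb N lam mu Delta (N div 2) - Pb N lam mu Delta N)) + Delta
          \<longrightarrow> (\<forall>c. c > 0 \<and> c dvd N \<longrightarrow> Tsys N lam mu Delta Tcl N \<le> Tsys N lam mu Delta Tcl c))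
       \<and> (N \<ge> 3 \<and> Delta + 1 / (real N * mu) < Tcl \<and> Tcl < Delta + 1 / mu
          \<and> lam \<le> real N * mu / ((real N - 2) * (Delta * real N * mu + 1))
          \<longrightarrow> (\<forall>c. c > 0 \<and> c dvd N \<longrightarrow> Tsys N lam mu Delta Tcl 1 \<le> Tsys N lam mu Delta Tcl c))"
proof (intro conjI impI allI)
  have N0: "N > 0" using assms by simp
  have Nr: "real N \<ge> 2" using assms by simp
  note A = assms(2,3,4) N0
  define P where "P = Pb N lam mu Delta"
  define u where "u = 1 / mu"
  have u: "u > 0" using assms by (simp add: u_def)
  have Ts: "\<And>c. Tsys N lam mu Delta Tcl c = (1 - P c) * (Delta + real c * u / real N) + P c * Tcl"
    by (simp add: Tsys_def P_def u_def)
  have Pbd: "\<And>c. c > 0 \<Longrightarrow> 0 < P c \<and> P c \<le> 1" using Pb_bounds[OF A] by (simp add: P_def)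
  {
    fix c :: nat
    assume H: "(1 / mu) * ((1 - 1 / real N - Pb N lam mu Delta N + Pb N lam mu Delta 1 / real N)
             / (Pb N lam mu Delta (N div 2) - Pb N lam mu Delta N)) + Delta \<le> Tcl"
    assume c: "0 < c \<and> c dvd N"
    show "Tsys N lam mu Delta Tcl N \<le> Tsys N lam mu Delta Tcl c"
    proof (cases "c = N")
      case True then show ?thesis by simp
    next
      case False
      define h where "h = N div 2"
      have h1: "h \<ge> 1" "h < N" using assms(1) by (auto simp: h_def)
      obtain k where k: "N = c * k" using c by blast
      have "k \<noteq> 1" using False k by auto
      moreover have "k \<noteq> 0" using k N0 by auto
      ultimately have "k \<ge> 2" by simp
      hence "c * 2 \<le> N" using k by (metis mult_le_mono2)
      hence ch: "c \<le> h" by (simp add: h_def)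
      have c1: "c \<ge> 1" using c by simp
      have PcPh: "P h \<le> P c" using Pb_mono_le[OF A c1 ch] by (simp add: P_def)
      have PhPN: "P N < P h" using Pb_mono[OF A h1] by (simp add: P_def)
      have P1Pc: "P c \<le> P 1" using Pb_mono_le[OF A _ c1] by (simp add: P_def)
      have P1PN: "P N \<le> P 1" using Pb_mono_le[OF A _, of 1 N] N0 by (simp add: P_def)
      have PN1: "P N \<le> 1" "P 1 \<le> 1" "P c \<le> 1" using Pbd N0 c by auto
      define den where "den = P h - P N"
      define X where "X = 1 - 1 / real N - P N + P 1 / real N"
      define T' where "T' = Tcl - Delta"
      have den: "den > 0" using PhPN by (simp add: den_def)
      have HX: "u * (X / den) \<le> T'" using H by (simp add: u_def X_def den_def P_def h_def T'_def)
      have "X - (1 - P N) * (1 - 1 / real N) = (P 1 - P N) / real N"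
        using N0 by (simp add: X_def field_simps)
      also have "\<dots> \<ge> 0" using P1PN by simp
      finally have "X \<ge> (1 - P N) * (1 - 1 / real N)" by simp
      moreover have "(1 - P N) * (1 - 1 / real N) \<ge> 0" using PN1 Nr by simp
      ultimately have X0: "X \<ge> 0" by linarith
      have T'0: "T' \<ge> 0" using HX X0 den u by (smt (verit) divide_nonneg_pos mult_nonneg_nonneg)
      have "u * X = den * (u * (X / den))" using den by simp
      also have "\<dots> \<le> den * T'" using HX den by (intro mult_left_mono) auto
      also have "\<dots> \<le> (P c - P N) * T'" using T'0 PcPh by (simp add: den_def mult_right_mono)
      finally have K1: "u * X \<le> (P c - P N) * T'" .
      have "(1 - P 1) \<le> (1 - P c) * real c"
      proof -
        have "(1 - P c) * 1 \<le> (1 - P c) * real c" using PN1 c1 by (intro mult_left_mono) auto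
        thus ?thesis using P1Pc by simp
      qed
      hence "(1 - P 1) / real N \<le> (1 - P c) * real c / real N" using N0 by (simp add: divide_right_mono)
      moreover have "X = (1 - P N) - (1 - P 1) / real N" by (simp add: X_def diff_divide_distrib)
      ultimately have "(1 - P N) - (1 - P c) * real c / real N \<le> X" by linarith
      hence K2: "u * ((1 - P N) - (1 - P c) * real c / real N) \<le> u * X"
        using u by (intro mult_left_mono) auto
      have "Tsys N lam mu Delta Tcl c - Tsys N lam mu Delta Tcl N
            = (P c - P N) * T' - u * ((1 - P N) - (1 - P c) * real c / real N)"
        unfolding Ts T'_def using N0 by (simp add: field_simps)
      thus ?thesis using K1 K2 by linarith
    qed
  }
  {
    fix c :: nat
    assume H: "3 \<le> N \<and> Delta + 1 / (real N * mu) < Tcl \<and> Tcl < Delta + 1 / mu \<and>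
          lam \<le> real N * mu / ((real N - 2) * (Delta * real N * mu + 1))"
    assume c: "0 < c \<and> c dvd N"
    show "Tsys N lam mu Delta Tcl 1 \<le> Tsys N lam mu Delta Tcl c"
    proof (cases "c = 1")
      case True then show ?thesis by simp
    next
      case False
      hence c2: "real c \<ge> 2" using c by simp
      define s1 where "s1 = Delta + u / real N"
      define sc where "sc = Delta + real c * u / real N"
      have N3: "real N \<ge> 3" using H by simp
      have scs1: "sc - s1 \<ge> u / real N"
      proof -
        have "sc - s1 = (real c - 1) * (u / real N)" using N0 by (simp add: sc_def s1_def field_simps)
        moreover have "(real c - 1) * (u / real N) \<ge> 1 * (u / real N)"
          using c2 u N0 by (intro mult_right_mono) auto
        ultimately show ?thesis by simp
      qed
      have Ts1: "s1 < Tcl" "Tcl < Delta + u" using H by (simp_all add: s1_def u_def mult.commute)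
      define a where "a = offered_load N lam mu Delta 1"
      have a0: "a > 0" using A by (simp add: a_def offered_load_def add_nonneg_pos)
      have P1: "P 1 = a / (1 + a)" unfolding P_def a_def by (rule Pb_one)
      have aeq: "a = lam * (Delta * real N * mu + 1) / (real N * mu)"
        using assms N0 by (simp add: a_def offered_load_def field_simps)
      have pos: "(real N - 2) > 0" "Delta * real N * mu + 1 > 0" "real N * mu > 0"
        using N3 assms N0 by (auto intro!: add_nonneg_pos mult_nonneg_nonneg)
      have "a * (real N - 2) \<le> 1"
      proof -
        have "lam * ((real N - 2) * (Delta * real N * mu + 1)) \<le> real N * mu"
          using H pos by (simp add: pos_le_divide_eq mult_pos_pos)
        thus ?thesis unfolding aeq using pos by (simp add: field_simps)
      qed
      hence P1b: "P 1 * (real N - 1) \<le> 1" unfolding P1 using a0 by (simp add: field_simps)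
      have "P 1 * (Tcl - s1) \<le> P 1 * ((real N - 1) * (u / real N))"
      proof -
        have "(real N - 1) * (u / real N) = u - u / real N" using N0 by (simp add: field_simps)
        hence "Tcl - s1 < (real N - 1) * (u / real N)" using Ts1 by (simp add: s1_def)
        thus ?thesis using Pbd[of 1] by (intro mult_left_mono) auto
      qed
      also have "\<dots> = (P 1 * (real N - 1)) * (u / real N)" by simp
      also have "\<dots> \<le> 1 * (u / real N)" using P1b u N0 by (intro mult_right_mono) auto
      finally have k1: "P 1 * (Tcl - s1) \<le> u / real N" by simp
      have T1: "Tsys N lam mu Delta Tcl 1 = s1 + P 1 * (Tcl - s1)"
        unfolding Ts s1_def by (simp add: algebra_simps add_divide_distrib[symmetric])
      have Tc: "Tsys N lam mu Delta Tcl c = sc + P c * (Tcl - sc)"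
        unfolding Ts sc_def by (simp add: algebra_simps add_divide_distrib[symmetric])
      have up1: "Tsys N lam mu Delta Tcl 1 \<le> Tcl"
      proof -
        have "P 1 * (Tcl - s1) \<le> 1 * (Tcl - s1)" using Pbd[of 1] Ts1 by (intro mult_right_mono) auto
        thus ?thesis using T1 by simp
      qed
      have up2: "Tsys N lam mu Delta Tcl 1 \<le> sc" using T1 k1 scs1 by linarith
      show ?thesis
      proof (cases "Tcl \<ge> sc")
        case True
        hence "P c * (Tcl - sc) \<ge> 0" using Pbd[of c] c by simp
        thus ?thesis using Tc up2 by linarith
      next
        case False
        have "P c * (sc - Tcl) \<le> 1 * (sc - Tcl)" using Pbd[of c] c False by (intro mult_right_mono) auto
        hence "Tsys N lam mu Delta Tcl c \<ge> Tcl" using Tc by (simp add: algebra_simps)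
        thus ?thesis using up1 by linarith
      qed
    qed
  }
qed

end
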